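(* $$\sum_{n=1}^\infty(M_e(\mathcal{D},n)-M_o(\mathcal{D},n))q^n=\frac{1}{1+q}\sum_{n=1}^\infty q^{n(3n+1)/2}(1-q^{2n+1})-q(q^2;q)_{\infty}.$$
   Context: $(z;q)_\infty=\prod_{j\ge0}(1-zq^j)$. $M_e(\mathcal{D},n)$ (resp. $M_o(\mathcal{D},n)$) is the number of partitions of $n$ into distinct parts with even (resp. odd) crank, where for a partition into distinct parts the crank is its largest part if $1$ is not a part, and is (number of parts) $-2$ if $1$ is a part. *)

theory Defs
  imports "HOL-Analysis.Analysis"
begin

definition distinct_parts :: "nat \<Rightarrow> nat set set" where
  "distinct_parts n = {S. finite S \<and> 0 \<notin> S \<and> \<Sum>S = n}"

definition dcrank :: "nat set \<Rightarrow> int" where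
  "dcrank S = (if 1 \<in> S then int (card S) - 2 else int (Max S))"

definition Me :: "nat \<Rightarrow> nat" where
  "Me n = card {S \<in> distinct_parts n. even (dcrank S)}"

definition Mo :: "nat \<Rightarrow> nat" where
  "Mo n = card {S \<in> distinct_parts n. odd (dcrank S)}"

end

theory Submission imports Defs begin

definition PP :: "complex \<Rightarrow> complex \<Rightarrow> nat \<Rightarrow> complex" where
  "PP q a n = (\<Prod>j\<in>{1..n}. 1 + a * q ^ j)"

definition ff :: "complex \<Rightarrow> complex \<Rightarrow> complex \<Rightarrow> complex" where
  "ff q a t = (\<Sum>n. t ^ n * PP q a n)"

lemma geo_bound:
  fixes s :: real
  assumes "0 \<le> s" "s < 1"
  shows "(\<Sum>j\<in>{1..n}. s ^ j) \<le> 1 / (1 - s)"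
proof -
  have "(\<Sum>j\<in>{1..n}. s ^ j) \<le> (\<Sum>j<Suc n. s ^ j)"
    by (rule sum_mono2) (use assms in auto)
  also have "\<dots> = (1 - s ^ Suc n) / (1 - s)"
    using assms by (subst sum_gp_strict) auto
  also have "\<dots> \<le> 1 / (1 - s)"
    using assms by (intro divide_right_mono) auto
  finally show ?thesis .
qed

lemma prod_bound:
  fixes s :: real
  assumes "0 \<le> s" "s < 1"
  shows "(\<Prod>j\<in>{1..n}. 1 + s ^ j) \<le> exp (1 / (1 - s))"
proof -
  have "(\<Prod>j\<in>{1..n}. 1 + s ^ j) \<le> (\<Prod>j\<in>{1..n}. exp (s ^ j))"
    by (intro prod_mono) (use assms in \<open>auto simp: exp_ge_add_one_self\<close>)
  also have "\<dots> = exp (\<Sum>j\<in>{1..n}. s ^ j)" by (simp add: exp_sum)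
  also have "\<dots> \<le> exp (1 / (1 - s))" using geo_bound[OF assms] by simp
  finally show ?thesis .
qed

lemma PP_bound:
  assumes "norm q < 1" "norm a \<le> 1"
  shows "norm (PP q a n) \<le> exp (1 / (1 - norm q))"
proof -
  have "norm (PP q a n) = (\<Prod>j\<in>{1..n}. norm (1 + a * q ^ j))"
    by (simp add: PP_def prod_norm)
  also have "\<dots> \<le> (\<Prod>j\<in>{1..n}. 1 + norm q ^ j)"
  proof (intro prod_mono conjI)
    fix j assume "j \<in> {1..n}"
    have "norm (1 + a * q ^ j) \<le> 1 + norm (a * q ^ j)" by (metis norm_one norm_triangle_ineq)
    also have "norm (a * q ^ j) \<le> norm q ^ j"
      using assms by (simp add: norm_mult norm_power mult_left_le_one_le)
    finally show "norm (1 + a * q ^ j) \<le> 1 + norm q ^ j" by simp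
  qed simp
  also have "\<dots> \<le> exp (1 / (1 - norm q))" by (rule prod_bound) (use assms in auto)
  finally show ?thesis .
qed

lemma ff_summable:
  assumes "norm q < 1" "norm a \<le> 1" "norm t < 1"
  shows "summable (\<lambda>n. t ^ n * PP q a n)"
proof (rule summable_comparison_test')
  show "summable (\<lambda>n. exp (1 / (1 - norm q)) * norm t ^ n)"
    using assms by (intro summable_mult summable_geometric) auto
  fix n
  show "norm (t ^ n * PP q a n) \<le> exp (1 / (1 - norm q)) * norm t ^ n"
    using PP_bound[OF assms(1,2), of n]
    by (simp add: norm_mult norm_power mult.commute mult_left_mono)
qed

lemma ff_bound:
  assumes "norm q < 1" "norm a \<le> 1" "norm t \<le> norm q"
  shows "norm (ff q a t) \<le> exp (1 / (1 - norm q)) / (1 - norm q)"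
proof -
  have t1: "norm t < 1" using assms by simp
  have s: "summable (\<lambda>n. exp (1 / (1 - norm q)) * norm q ^ n)"
    using assms by (intro summable_mult summable_geometric) auto
  have le: "norm (t ^ n * PP q a n) \<le> exp (1 / (1 - norm q)) * norm q ^ n" for n
  proof -
    have "norm (t ^ n * PP q a n) = norm t ^ n * norm (PP q a n)" by (simp add: norm_mult norm_power)
    also have "\<dots> \<le> norm q ^ n * exp (1 / (1 - norm q))"
      by (intro mult_mono power_mono PP_bound) (use assms in auto)
    finally show ?thesis by (simp add: mult.commute)
  qed
  have sn: "summable (\<lambda>n. norm (t ^ n * PP q a n))"
    by (rule summable_comparison_test'[OF s]) (use le in auto)
  have "norm (ff q a t) \<le> (\<Sum>n. norm (t ^ n * PP q a n))"
    unfolding ff_def by (rule summable_norm[OF sn])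
  also have "\<dots> \<le> (\<Sum>n. exp (1 / (1 - norm q)) * norm q ^ n)"
    by (rule suminf_le[OF le sn s])
  also have "\<dots> = exp (1 / (1 - norm q)) / (1 - norm q)"
    using assms by (simp add: suminf_mult suminf_geometric divide_simps)
  finally show ?thesis .
qed


lemma PP_0 [simp]: "PP q a 0 = 1"
  by (simp add: PP_def)

lemma norm_pow_Suc_less:
  fixes q :: complex
  assumes "norm q < 1" shows "norm (q ^ Suc n) < 1"
proof -
  have "norm q ^ Suc n \<le> norm q ^ 1" by (rule power_decreasing) (use assms in auto)
  moreover have "norm (q ^ Suc n) = norm q ^ Suc n" by (rule norm_power)
  ultimately show ?thesis using assms by simp
qed

lemma PP_Suc1: "PP q a (Suc n) = PP q a n * (1 + a * q ^ Suc n)"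
  by (simp add: PP_def)

lemma PP_Suc2: "PP q a (Suc n) = (1 + a * q) * PP q (a * q) n"
proof -
  have "PP q a (Suc n) = (1 + a * q) * (\<Prod>j\<in>{Suc 1..Suc n}. 1 + a * q ^ j)"
    unfolding PP_def by (subst prod.atLeast_Suc_atMost) auto
  also have "(\<Prod>j\<in>{Suc 1..Suc n}. 1 + a * q ^ j) = (\<Prod>j\<in>{1..n}. 1 + a * q ^ Suc j)"
    by (rule prod.shift_bounds_cl_Suc_ivl)
  also have "\<dots> = PP q (a * q) n"
    unfolding PP_def by (simp add: mult_ac)
  finally show ?thesis .
qed

lemma ff_E2:
  assumes "norm q < 1" "norm a \<le> 1" "norm t < 1"
  shows "ff q a t = 1 + t * (1 + a * q) * ff q (a * q) t"
proof -
  have aq: "norm (a * q) \<le> 1"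
    using assms by (simp add: norm_mult mult_le_one)
  have s1: "summable (\<lambda>n. t ^ n * PP q a n)" by (rule ff_summable[OF assms])
  have s2: "summable (\<lambda>n. t ^ n * PP q (a*q) n)" by (rule ff_summable[OF assms(1) aq assms(3)])
  have "(\<lambda>n. t ^ Suc n * PP q a (Suc n)) = (\<lambda>n. (t * (1 + a * q)) * (t ^ n * PP q (a*q) n))"
    by (simp add: PP_Suc2 mult_ac)
  moreover have "(\<Sum>n. t ^ Suc n * PP q a (Suc n)) = ff q a t - 1"
    unfolding ff_def using suminf_split_head[OF s1] by simp
  moreover have "(\<Sum>n. (t * (1 + a * q)) * (t ^ n * PP q (a*q) n)) = t * (1 + a * q) * ff q (a*q) t"
    unfolding ff_def by (rule suminf_mult[OF s2])
  ultimately show ?thesis by (simp add: algebra_simps)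
qed

lemma ff_E1:
  assumes "norm q < 1" "norm a \<le> 1" "norm t < 1"
  shows "(1 - t) * ff q a t = 1 + a * t * q * ff q a (t * q)"
proof -
  have tq: "norm (t * q) < 1"
    proof -
    have "norm t * norm q \<le> norm t" by (rule mult_left_le) (use assms in auto)
    then show ?thesis using assms by (simp add: norm_mult)
  qed
  have s1: "summable (\<lambda>n. t ^ n * PP q a n)" by (rule ff_summable[OF assms])
  have s2: "summable (\<lambda>n. (t*q) ^ n * PP q a n)" by (rule ff_summable[OF assms(1,2) tq])
  have "(\<lambda>n. t ^ Suc n * PP q a (Suc n)) = (\<lambda>n. t * (t ^ n * PP q a n) + (a * t * q) * ((t*q) ^ n * PP q a n))"
    by (simp add: PP_Suc1 algebra_simps power_mult_distrib)
  moreover have "(\<Sum>n. t ^ Suc n * PP q a (Suc n)) = ff q a t - 1"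
    unfolding ff_def using suminf_split_head[OF s1] by simp
  moreover have "(\<Sum>n. t * (t ^ n * PP q a n) + (a * t * q) * ((t*q) ^ n * PP q a n))
      = t * ff q a t + a * t * q * ff q a (t * q)"
    unfolding ff_def
    by (subst suminf_add[symmetric]) (auto intro!: summable_mult s1 s2 simp: suminf_mult[OF s1] suminf_mult[OF s2])
  ultimately show ?thesis by (simp add: algebra_simps)
qed

definition uu :: "complex \<Rightarrow> nat \<Rightarrow> complex" where
  "uu q k = ff q (q ^ k) (- (q ^ Suc k))"

lemma uu_rec:
  assumes "norm q < 1"
  shows "uu q k = (1 - q ^ Suc k) + q ^ (3 * k + 4) * uu q (Suc k)"
proof -
  have nq: "norm (q ^ n) \<le> 1" for n using assms by (simp add: norm_power power_le_one)
  have nq2: "norm (q ^ Suc n) < 1" for n by (rule norm_pow_Suc_less[OF assms])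
  have e1: "(1 + q ^ Suc k) * uu q k = 1 - q ^ k * q ^ k * q * q * ff q (q ^ k) (- (q ^ Suc (Suc k)))"
    using ff_E1[OF assms nq[of k], of "- (q ^ Suc k)"] nq2[of k]
    by (simp add: uu_def algebra_simps)
  have e2: "ff q (q ^ k) (- (q ^ Suc (Suc k))) = 1 - q ^ k * q * q * (1 + q ^ Suc k) * uu q (Suc k)"
    using ff_E2[OF assms nq[of k], of "- (q ^ Suc (Suc k))"] nq2[of "Suc k"]
    by (simp add: uu_def algebra_simps)
  have ne: "1 + q ^ Suc k \<noteq> 0"
  proof
    assume "1 + q ^ Suc k = 0"
    then have "q ^ Suc k = -1" by (simp add: add_eq_0_iff)
    then show False using nq2[of k] by simp
  qed
  have "(1 + q ^ Suc k) * uu q k = (1 + q ^ Suc k) * ((1 - q ^ Suc k) + q ^ (3 * k + 4) * uu q (Suc k))"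
    unfolding e1 e2 by (simp add: algebra_simps power_add numeral_3_eq_3 eval_nat_numeral)
  with ne show ?thesis by simp
qed


definition ee :: "nat \<Rightarrow> nat" where "ee k = k * (3 * k + 5) div 2"

lemma ee2: "2 * ee k = k * (3 * k + 5)"
proof -
  have "even (k * (3 * k + 5))" by auto
  then show ?thesis unfolding ee_def by simp
qed

lemma ee_Suc: "ee (Suc k) = ee k + 3 * k + 4"
proof -
  have "2 * ee (Suc k) = Suc k * (3 * Suc k + 5)" by (rule ee2)
  also have "\<dots> = k * (3 * k + 5) + 2 * (3 * k + 4)" by (simp add: algebra_simps)
  also have "\<dots> = 2 * (ee k + 3 * k + 4)" by (simp only: ee2[of k, symmetric]) simp
  finally have "2 * ee (Suc k) = 2 * (ee k + 3 * k + 4)" .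
  then show ?thesis by simp
qed

lemma ee_ge: "k \<le> ee k"
proof -
  have "2 * k \<le> 2 * ee k" unfolding ee2 by simp
  then show ?thesis by simp
qed

lemma uu_unroll:
  assumes "norm q < 1"
  shows "uu q 0 = (\<Sum>k<K. q ^ ee k * (1 - q ^ Suc k)) + q ^ ee K * uu q K"
proof (induction K)
  case 0
  then show ?case by (simp add: ee_def)
next
  case (Suc K)
  then show ?case
    using uu_rec[OF assms, of K] by (simp add: ee_Suc algebra_simps power_add)
qed

lemma uu_sums:
  assumes "norm q < 1"
  shows "(\<lambda>k. q ^ ee k * (1 - q ^ Suc k)) sums uu q 0"
proof -
  define C where "C = exp (1 / (1 - norm q)) / (1 - norm q)"
  have b: "norm (uu q K) \<le> C" for K
  proof -
    have "norm (q ^ K) \<le> 1" using assms by (simp add: norm_power power_le_one)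
    moreover have "norm (- (q ^ Suc K)) \<le> norm q"
    proof -
      have "norm q ^ Suc K \<le> norm q ^ 1" by (rule power_decreasing) (use assms in auto)
      then show ?thesis by (simp add: norm_power del: power_Suc)
    qed
    ultimately show ?thesis unfolding uu_def C_def by (rule ff_bound[OF assms])
  qed
  have "(\<lambda>K. q ^ ee K * uu q K) \<longlonglongrightarrow> 0"
  proof (rule Lim_null_comparison)
    show "\<forall>\<^sub>F K in sequentially. norm (q ^ ee K * uu q K) \<le> C * norm q ^ K"
    proof (intro always_eventually allI)
      fix K
      have "norm (q ^ ee K * uu q K) = norm q ^ ee K * norm (uu q K)" by (simp add: norm_mult norm_power)
      also have "\<dots> \<le> norm q ^ K * C"
        by (intro mult_mono power_decreasing ee_ge b) (use assms in auto)
      finally show "norm (q ^ ee K * uu q K) \<le> C * norm q ^ K" by (simp add: mult.commute)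
    qed
    show "(\<lambda>K. C * norm q ^ K) \<longlonglongrightarrow> 0"
      using assms by (intro tendsto_mult_right_zero LIMSEQ_power_zero) auto
  qed
  then have "(\<lambda>K. uu q 0 - q ^ ee K * uu q K) \<longlonglongrightarrow> uu q 0 - 0"
    by (intro tendsto_diff tendsto_const)
  moreover have "(\<lambda>K. uu q 0 - q ^ ee K * uu q K) = (\<lambda>K. \<Sum>k<K. q ^ ee k * (1 - q ^ Suc k))"
  proof
    fix K
    have "uu q 0 = (\<Sum>k<K. q ^ ee k * (1 - q ^ Suc k)) + q ^ ee K * uu q K" by (rule uu_unroll[OF assms])
    then show "uu q 0 - q ^ ee K * uu q K = (\<Sum>k<K. q ^ ee k * (1 - q ^ Suc k))" by simp
  qed
  ultimately show ?thesis unfolding sums_def by simp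
qed


lemma pent_exp: "Suc n * (3 * Suc n + 1) div 2 = ee n + n + 2"
proof -
  have "Suc n * (3 * Suc n + 1) = n * (3 * n + 5) + 2 * (n + 2)" by (simp add: algebra_simps)
  also have "\<dots> = 2 * (ee n + n + 2)" by (simp only: ee2[of n, symmetric]) simp
  finally show ?thesis by simp
qed

lemma summable_pow_ge:
  fixes q :: complex
  assumes "norm q < 1" "\<And>n. n \<le> g n"
  shows "summable (\<lambda>n. q ^ g n)"
proof (rule summable_comparison_test')
  show "summable (\<lambda>n. norm q ^ n)" using assms by (intro summable_geometric) auto
  fix n show "norm (q ^ g n) \<le> norm q ^ n"
    using assms by (simp add: norm_power power_decreasing)
qed

lemma target_sums:
  assumes "norm q < 1"
  shows "(\<lambda>n. q ^ (Suc n * (3 * Suc n + 1) div 2) * (1 - q ^ (2 * Suc n + 1))) sums (q - q * uu q 0)"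
proof -
  define G where "G = (\<lambda>n. q ^ (ee n + n + 2))"
  define H where "H = (\<lambda>n. q ^ (ee n + 1))"
  have sG: "summable G" unfolding G_def by (rule summable_pow_ge[OF assms]) simp
  have sH: "summable H" unfolding H_def by (rule summable_pow_ge[OF assms]) (use ee_ge in \<open>auto simp: le_SucI\<close>)
  have "(\<lambda>k. q * (q ^ ee k * (1 - q ^ Suc k))) sums (q * uu q 0)"
    by (rule sums_mult[OF uu_sums[OF assms]])
  moreover have "(\<lambda>k. q * (q ^ ee k * (1 - q ^ Suc k))) = (\<lambda>k. H k - G k)"
    unfolding G_def H_def by (auto simp: algebra_simps power_add)
  ultimately have "(\<lambda>k. H k - G k) sums (q * uu q 0)" by simp
  moreover have "(\<lambda>k. H k - G k) sums (suminf H - suminf G)"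
    by (intro sums_diff summable_sums sH sG)
  ultimately have hg: "suminf H - suminf G = q * uu q 0" using sums_unique2 by blast
  have "(\<lambda>n. H (Suc n)) sums (suminf H - H 0)"
    using summable_sums[OF sH] by (subst sums_Suc_iff) simp
  then have "(\<lambda>n. G n - H (Suc n)) sums (suminf G - (suminf H - H 0))"
    by (intro sums_diff summable_sums sG)
  moreover have "H 0 = q" unfolding H_def ee_def by simp
  moreover have "(\<lambda>n. G n - H (Suc n)) = (\<lambda>n. q ^ (Suc n * (3 * Suc n + 1) div 2) * (1 - q ^ (2 * Suc n + 1)))"
  proof
    fix n
    have "ee (Suc n) + 1 = (ee n + n + 2) + (2 * Suc n + 1)" by (simp add: ee_Suc)
    then show "G n - H (Suc n) = q ^ (Suc n * (3 * Suc n + 1) div 2) * (1 - q ^ (2 * Suc n + 1))"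
      unfolding G_def H_def pent_exp by (simp only: power_add) (simp add: algebra_simps)
  qed
  ultimately show ?thesis using hg by (simp add: algebra_simps)
qed


definition sg :: "nat set \<Rightarrow> complex" where
  "sg S = (if even (dcrank S) then 1 else -1)"

lemma dp_sub:
  assumes "S \<in> distinct_parts n" shows "S \<subseteq> {1..n}"
proof
  fix x assume x: "x \<in> S"
  have fin: "finite S" and z: "0 \<notin> S" and s: "\<Sum>S = n" using assms by (auto simp: distinct_parts_def)
  have "x \<le> \<Sum>S" using member_le_sum[of x S id] x fin by simp
  moreover have "1 \<le> x" using x z by (cases x) auto
  ultimately show "x \<in> {1..n}" using s by auto
qed

lemma dp_finite: "finite (distinct_parts n)"
  by (rule finite_subset[of _ "Pow {1..n}"]) (use dp_sub in auto)

lemma c_eq: "(of_int (int (Me n) - int (Mo n)) :: complex) = (\<Sum>S\<in>distinct_parts n. sg S)"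
proof -
  have "(\<Sum>S\<in>distinct_parts n. sg S)
     = (\<Sum>S\<in>distinct_parts n \<inter> {S. even (dcrank S)}. 1) + (\<Sum>S\<in>distinct_parts n \<inter> - {S. even (dcrank S)}. -1)"
    unfolding sg_def by (rule sum.If_cases[OF dp_finite])
  also have "distinct_parts n \<inter> {S. even (dcrank S)} = {S \<in> distinct_parts n. even (dcrank S)}" by auto
  also have "distinct_parts n \<inter> - {S. even (dcrank S)} = {S \<in> distinct_parts n. odd (dcrank S)}" by auto
  finally show ?thesis unfolding Me_def Mo_def by simp
qed

lemma sum_shift1: "(\<Sum>n<N. g (Suc n)) = (\<Sum>n\<in>{1..N}. g n)"
  by (induction N) (auto simp: atLeastAtMostSuc_conv add.commute)

definition WW :: "nat \<Rightarrow> nat set set" where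
  "WW N = {S \<in> Pow {1..N}. S \<noteq> {} \<and> \<Sum>S \<le> N}"

definition VV :: "nat \<Rightarrow> nat set set" where
  "VV N = {S \<in> Pow {1..N}. N < \<Sum>S}"

lemma partial_eq:
  "(\<Sum>n<N. of_int (int (Me (Suc n)) - int (Mo (Suc n))) * q ^ Suc n)
    = (\<Sum>S\<in>WW N. sg S * q ^ \<Sum>S)"
proof -
  have fW: "finite (WW N)" unfolding WW_def by (rule finite_subset[of _ "Pow {1..N}"]) auto
  have "(\<Sum>n<N. of_int (int (Me (Suc n)) - int (Mo (Suc n))) * q ^ Suc n)
      = (\<Sum>n\<in>{1..N}. of_int (int (Me n) - int (Mo n)) * q ^ n)"
    by (rule sum_shift1)
  also have "\<dots> = (\<Sum>n\<in>{1..N}. \<Sum>S\<in>{S \<in> WW N. \<Sum>S = n}. sg S * q ^ \<Sum>S)"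
  proof (rule sum.cong[OF refl])
    fix n assume n: "n \<in> {1..N}"
    have "{S \<in> WW N. \<Sum>S = n} = distinct_parts n"
    proof (intro equalityI subsetI)
      fix S assume "S \<in> {S \<in> WW N. \<Sum>S = n}"
      then show "S \<in> distinct_parts n" unfolding WW_def distinct_parts_def
        by (auto intro: rev_finite_subset[OF finite_atLeastAtMost])
    next
      fix S assume S: "S \<in> distinct_parts n"
      then have "S \<subseteq> {1..n}" by (rule dp_sub)
      moreover have "\<Sum>S = n" using S by (simp add: distinct_parts_def)
      moreover have "S \<noteq> {}" using n \<open>\<Sum>S = n\<close> by auto
      ultimately show "S \<in> {S \<in> WW N. \<Sum>S = n}" using n unfolding WW_def by auto
    qed
    moreover have "(\<Sum>S\<in>distinct_parts n. sg S * q ^ \<Sum>S) = (\<Sum>S\<in>distinct_parts n. sg S * q ^ n)"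
      by (rule sum.cong) (auto simp: distinct_parts_def)
    moreover have "(\<Sum>S\<in>distinct_parts n. sg S * q ^ n) = (\<Sum>S\<in>distinct_parts n. sg S) * q ^ n"
      by (simp add: sum_distrib_right)
    ultimately show "of_int (int (Me n) - int (Mo n)) * q ^ n = (\<Sum>S\<in>{S \<in> WW N. \<Sum>S = n}. sg S * q ^ \<Sum>S)"
      by (simp only: c_eq)
  qed
  also have "\<dots> = (\<Sum>S\<in>WW N. sg S * q ^ \<Sum>S)"
  proof (rule sum.group[OF fW])
    show "(\<lambda>S. \<Sum>S) ` WW N \<subseteq> {1..N}"
    proof
      fix m assume "m \<in> (\<lambda>S. \<Sum>S) ` WW N"
      then obtain S where S: "S \<in> WW N" "m = \<Sum>S" by auto
      then have fin: "finite S" "S \<subseteq> {1..N}" "S \<noteq> {}" "\<Sum>S \<le> N" unfolding WW_def by (auto intro: finite_subset)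
      then obtain x where "x \<in> S" by auto
      then have "1 \<le> x" "x \<le> \<Sum>S" using fin member_le_sum[of x S id] by auto
      then show "m \<in> {1..N}" using S fin by auto
    qed
  qed simp
  finally show ?thesis .
qed

lemma T_split:
  "(\<Sum>S\<in>Pow {1..N} - {{}}. sg S * q ^ \<Sum>S) = (\<Sum>S\<in>WW N. sg S * q ^ \<Sum>S) + (\<Sum>S\<in>VV N. sg S * q ^ \<Sum>S)"
proof -
  have "Pow {1..N} - {{}} = WW N \<union> VV N" unfolding WW_def VV_def by auto
  moreover have "WW N \<inter> VV N = {}" unfolding WW_def VV_def by auto
  moreover have "finite (WW N)" "finite (VV N)" unfolding WW_def VV_def by auto
  ultimately show ?thesis by (simp add: sum.union_disjoint)
qed

lemma subset_sum_prod:
  fixes s :: "'a :: comm_semiring_1"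
  assumes "finite A"
  shows "(\<Sum>S\<in>Pow A. s ^ \<Sum>S) = (\<Prod>j\<in>A. 1 + s ^ j)"
proof -
  have "(\<Prod>j\<in>A. s ^ j + 1) = (\<Sum>X\<in>Pow A. (\<Prod>x\<in>X. s ^ x) * (\<Prod>x\<in>A - X. 1))"
    by (rule prod_add[OF assms])
  then show ?thesis by (simp add: power_sum add.commute)
qed

lemma VV_bound:
  assumes "norm q < 1"
  shows "norm (\<Sum>S\<in>VV N. sg S * q ^ \<Sum>S) \<le> sqrt (norm q) ^ N * exp (1 / (1 - sqrt (norm q)))"
proof -
  define s where "s = sqrt (norm q)"
  have s0: "0 \<le> s" and s1: "s < 1" using assms by (auto simp: s_def real_sqrt_lt_1_iff)
  have fV: "finite (VV N)" unfolding VV_def by auto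
  have "norm (\<Sum>S\<in>VV N. sg S * q ^ \<Sum>S) \<le> (\<Sum>S\<in>VV N. norm (sg S * q ^ \<Sum>S))"
    by (rule norm_sum)
  also have "\<dots> \<le> (\<Sum>S\<in>VV N. s ^ N * s ^ \<Sum>S)"
  proof (rule sum_mono)
    fix S assume S: "S \<in> VV N"
    have "norm (sg S * q ^ \<Sum>S) = norm q ^ \<Sum>S" by (simp add: sg_def norm_mult norm_power)
    also have "\<dots> = s ^ (2 * \<Sum>S)" by (simp add: s_def power_mult)
    also have "\<dots> \<le> s ^ (N + \<Sum>S)" by (rule power_decreasing) (use S s0 s1 in \<open>auto simp: VV_def\<close>)
    finally show "norm (sg S * q ^ \<Sum>S) \<le> s ^ N * s ^ \<Sum>S" by (simp add: power_add)
  qed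
  also have "\<dots> \<le> (\<Sum>S\<in>Pow {1..N}. s ^ N * s ^ \<Sum>S)"
    by (rule sum_mono2) (use s0 in \<open>auto simp: VV_def\<close>)
  also have "\<dots> = s ^ N * (\<Prod>j\<in>{1..N}. 1 + s ^ j)"
    by (simp add: sum_distrib_left[symmetric] subset_sum_prod)
  also have "\<dots> \<le> s ^ N * exp (1 / (1 - s))"
    by (intro mult_left_mono prod_bound) (use s0 s1 in auto)
  finally show ?thesis unfolding s_def .
qed

lemma VV_lim:
  assumes "norm q < 1"
  shows "(\<lambda>N. \<Sum>S\<in>VV N. sg S * q ^ \<Sum>S) \<longlonglongrightarrow> 0"
proof (rule Lim_null_comparison)
  show "\<forall>\<^sub>F N in sequentially. norm (\<Sum>S\<in>VV N. sg S * q ^ \<Sum>S) \<le> sqrt (norm q) ^ N * exp (1 / (1 - sqrt (norm q)))"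
    using VV_bound[OF assms] by simp
  show "(\<lambda>N. sqrt (norm q) ^ N * exp (1 / (1 - sqrt (norm q)))) \<longlonglongrightarrow> 0"
    using assms by (intro tendsto_mult_left_zero LIMSEQ_power_zero) (auto simp: real_sqrt_lt_1_iff)
qed


lemma sg_ins1:
  assumes "finite T" "1 \<notin> T"
  shows "sg (insert 1 T) = - ((-1) ^ card T)"
  using assms by (cases "even (card T)") (auto simp: sg_def dcrank_def even_diff)

lemma sg_no1:
  assumes "S \<noteq> {}" "1 \<notin> S"
  shows "sg S = (-1) ^ Max S"
  using assms by (simp add: sg_def dcrank_def minus_one_power_iff)

lemma B_part:
  fixes q :: complex
  shows   "(\<Sum>S\<in>insert 1 ` Pow {2..N}. sg S * q ^ \<Sum>S) = - q * (\<Prod>j\<in>{2..N}. 1 - q ^ j)"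
proof -
  have inj: "inj_on (insert 1) (Pow {2..N})"
    by (rule inj_onI) (metis PowD atLeastAtMost_iff insert_ident not_one_le_zero numeral_le_one_iff semiring_norm(69) subset_eq)
  have "(\<Sum>S\<in>insert 1 ` Pow {2..N}. sg S * q ^ \<Sum>S) = (\<Sum>T\<in>Pow {2..N}. sg (insert 1 T) * q ^ \<Sum>(insert 1 T))"
    by (rule sum.reindex[OF inj, unfolded comp_def])
  also have "\<dots> = (\<Sum>T\<in>Pow {2..N}. - q * ((-1) ^ card T * (\<Prod>x\<in>T. q ^ x) * (\<Prod>x\<in>{2..N} - T. 1)))"
  proof (rule sum.cong[OF refl])
    fix T assume T: "T \<in> Pow {2..N}"
    then have fT: "finite T" and n1: "1 \<notin> T" by (auto intro: rev_finite_subset[OF finite_atLeastAtMost])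
    show "sg (insert 1 T) * q ^ \<Sum>(insert 1 T) = - q * ((-1) ^ card T * (\<Prod>x\<in>T. q ^ x) * (\<Prod>x\<in>{2..N} - T. 1))"
    proof -
      have "sg (insert 1 T) = - ((-1) ^ card T)" by (rule sg_ins1[OF fT n1])
      moreover have "\<Sum>(insert 1 T) = 1 + \<Sum>T" using fT n1 by simp
      ultimately show ?thesis by (simp add: power_sum power_add)
    qed
  qed
  also have "\<dots> = - q * (\<Sum>T\<in>Pow {2..N}. (-1) ^ card T * (\<Prod>x\<in>T. q ^ x) * (\<Prod>x\<in>{2..N} - T. 1))"
    by (simp add: sum_distrib_left)
  also have "(\<Sum>T\<in>Pow {2..N}. (-1) ^ card T * (\<Prod>x\<in>T. q ^ x) * (\<Prod>x\<in>{2..N} - T. 1)) = (\<Prod>j\<in>{2..N}. 1 - q ^ j)"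
    by (rule prod_diff_conv_sum[symmetric]) simp
  finally show ?thesis .
qed

lemma C_part:
  fixes q :: complex
  shows   "(\<Sum>S\<in>Pow {2..N} - {{}}. (-1) ^ Max S * q ^ \<Sum>S)
     = (\<Sum>k\<in>{1..<N}. (-1) ^ Suc k * q ^ Suc k * (\<Prod>j\<in>{2..k}. 1 + q ^ j))"
proof (induction N)
  case 0
  then show ?case by simp
next
  case (Suc N)
  show ?case
  proof (cases "N = 0")
    case True
    then show ?thesis by simp
  next
    case False
    define A where "A = {2..N}"
    have fA: "finite A" unfolding A_def by simp
    have nA: "Suc N \<notin> A" unfolding A_def by simp
    have ins: "{2..Suc N} = insert (Suc N) A" unfolding A_def using False by auto
    have inj: "inj_on (insert (Suc N)) (Pow A)"
      by (rule inj_onI) (metis PowD insert_ident nA subset_eq)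
    have split: "Pow {2..Suc N} - {{}} = (Pow A - {{}}) \<union> insert (Suc N) ` Pow A"
      unfolding ins Pow_insert by auto
    have disj: "(Pow A - {{}}) \<inter> insert (Suc N) ` Pow A = {}" using nA by auto
    have "(\<Sum>S\<in>Pow {2..Suc N} - {{}}. (-1) ^ Max S * q ^ \<Sum>S)
        = (\<Sum>S\<in>Pow A - {{}}. (-1) ^ Max S * q ^ \<Sum>S) + (\<Sum>S\<in>insert (Suc N) ` Pow A. (-1) ^ Max S * q ^ \<Sum>S)"
      unfolding split using fA disj by (intro sum.union_disjoint) auto
    also have "(\<Sum>S\<in>insert (Suc N) ` Pow A. (-1) ^ Max S * q ^ \<Sum>S)
        = (\<Sum>T\<in>Pow A. (-1) ^ Max (insert (Suc N) T) * q ^ \<Sum>(insert (Suc N) T))"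
      by (rule sum.reindex[OF inj, unfolded comp_def])
    also have "\<dots> = (\<Sum>T\<in>Pow A. (-1) ^ Suc N * q ^ Suc N * q ^ \<Sum>T)"
    proof (rule sum.cong[OF refl])
      fix T assume T: "T \<in> Pow A"
      then have fT: "finite T" using fA by (auto intro: rev_finite_subset)
      have "Max (insert (Suc N) T) = Suc N"
        using T fT by (intro Max_eqI) (auto simp: A_def)
      moreover have "Suc N \<notin> T" using T nA by auto
      then have "\<Sum>(insert (Suc N) T) = Suc N + \<Sum>T" using fT by simp
      ultimately show "(-1) ^ Max (insert (Suc N) T) * q ^ \<Sum>(insert (Suc N) T) = (-1) ^ Suc N * q ^ Suc N * q ^ \<Sum>T"
        by (simp add: power_add mult_ac)
    qed
    also have "\<dots> = (-1) ^ Suc N * q ^ Suc N * (\<Prod>j\<in>A. 1 + q ^ j)"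
      by (simp only: sum_distrib_left[symmetric] subset_sum_prod[OF fA])
    finally show ?thesis
      using Suc.IH False unfolding A_def by simp
  qed
qed


lemma T_dec:
  fixes q :: complex
  assumes "1 \<le> N"
  shows "(\<Sum>S\<in>Pow {1..N} - {{}}. sg S * q ^ \<Sum>S)
    = - q * (\<Prod>j\<in>{2..N}. 1 - q ^ j) + (\<Sum>S\<in>Pow {2..N} - {{}}. (-1) ^ Max S * q ^ \<Sum>S)"
proof -
  have split: "Pow {1..N} - {{}} = insert 1 ` Pow {2..N} \<union> (Pow {2..N} - {{}})"
  proof (intro equalityI subsetI)
    fix S assume S: "S \<in> Pow {1..N} - {{}}"
    show "S \<in> insert 1 ` Pow {2..N} \<union> (Pow {2..N} - {{}})"
    proof (cases "1 \<in> S")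
      case True
      then have "S = insert 1 (S - {1})" by auto
      moreover have "S - {1} \<in> Pow {2..N}" using S by auto
      ultimately show ?thesis by blast
    next
      case False
      then have "S \<in> Pow {2..N} - {{}}" using S by (auto simp: subset_eq) (metis One_nat_def Suc_1 Suc_leI le_neq_implies_less)
      then show ?thesis by blast
    qed
  next
    fix S assume "S \<in> insert 1 ` Pow {2..N} \<union> (Pow {2..N} - {{}})"
    then show "S \<in> Pow {1..N} - {{}}" using assms by auto
  qed
  have disj: "insert 1 ` Pow {2..N} \<inter> (Pow {2..N} - {{}}) = {}" by auto
  have "(\<Sum>S\<in>Pow {1..N} - {{}}. sg S * q ^ \<Sum>S)
      = (\<Sum>S\<in>insert 1 ` Pow {2..N}. sg S * q ^ \<Sum>S) + (\<Sum>S\<in>Pow {2..N} - {{}}. sg S * q ^ \<Sum>S)"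
    unfolding split using disj by (intro sum.union_disjoint) auto
  also have "(\<Sum>S\<in>Pow {2..N} - {{}}. sg S * q ^ \<Sum>S) = (\<Sum>S\<in>Pow {2..N} - {{}}. (-1) ^ Max S * q ^ \<Sum>S)"
  proof (rule sum.cong[OF refl])
    fix S assume "S \<in> Pow {2..N} - {{}}"
    then have "S \<noteq> {}" "1 \<notin> S" by auto
    then have "sg S = (-1) ^ Max S" by (rule sg_no1)
    then show "sg S * q ^ \<Sum>S = (-1) ^ Max S * q ^ \<Sum>S" by simp
  qed
  finally show ?thesis by (simp only: B_part)
qed

lemma PP1: "1 \<le> k \<Longrightarrow> PP q 1 k = (1 + q) * (\<Prod>j\<in>{2..k}. 1 + q ^ j)"
  unfolding PP_def by (subst prod.atLeast_Suc_atMost) (auto simp: numeral_2_eq_2)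

lemma C_eq:
  fixes q :: complex
  assumes "1 \<le> N"
  shows "(1 + q) * (\<Sum>k\<in>{1..<N}. (-1) ^ Suc k * q ^ Suc k * (\<Prod>j\<in>{2..k}. 1 + q ^ j))
     = - q * ((\<Sum>k<N. (-q) ^ k * PP q 1 k) - 1)"
proof -
  have "(1 + q) * (\<Sum>k\<in>{1..<N}. (-1) ^ Suc k * q ^ Suc k * (\<Prod>j\<in>{2..k}. 1 + q ^ j))
      = (\<Sum>k\<in>{1..<N}. - q * ((-q) ^ k * PP q 1 k))"
    unfolding sum_distrib_left
    by (rule sum.cong[OF refl]) (auto simp: PP1 power_minus' algebra_simps)
  also have "\<dots> = - q * (\<Sum>k\<in>{1..<N}. (-q) ^ k * PP q 1 k)" by (simp add: sum_distrib_left)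
  also have "(\<Sum>k<N. (-q) ^ k * PP q 1 k) = 1 + (\<Sum>k\<in>{1..<N}. (-q) ^ k * PP q 1 k)"
    using assms by (simp add: lessThan_atLeast0 sum.atLeast_Suc_lessThan)
  ultimately show ?thesis by simp
qed


theorem theorem5p1:
  fixes q :: complex
  assumes "norm q < 1"
  shows "(\<Sum>n. of_int (int (Me (Suc n)) - int (Mo (Suc n))) * q ^ Suc n)
    = 1 / (1 + q) * (\<Sum>n. q ^ (Suc n * (3 * Suc n + 1) div 2) * (1 - q ^ (2 * Suc n + 1)))
      - q * prodinf (\<lambda>j. 1 - q ^ (j + 2))"
proof -
  define f where "f = (\<lambda>n. of_int (int (Me (Suc n)) - int (Mo (Suc n))) * q ^ Suc n :: complex)"
  define g where "g = (\<lambda>j. 1 - q ^ (j + 2))"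
  define SS where "SS = (\<lambda>M. \<Sum>k<M. (-q) ^ k * PP q 1 k)"
  define BB where "BB = (\<lambda>N. \<Sum>S\<in>VV N. sg S * q ^ \<Sum>S)"
  have q1: "1 + q \<noteq> 0"
  proof
    assume "1 + q = 0" then have "q = -1" by (simp add: add_eq_0_iff)
    then show False using assms by simp
  qed
  have conv: "convergent_prod g"
  proof (rule abs_convergent_prod_imp_convergent_prod, rule summable_imp_abs_convergent_prod)
    have "summable (\<lambda>j. norm q ^ (j + 2))"
      using summable_ignore_initial_segment[OF summable_geometric[of "norm q"], of 2] assms by simp
    moreover have "(\<lambda>i. norm (g i - 1)) = (\<lambda>j. norm q ^ (j + 2))"
      by (simp add: g_def norm_power norm_mult fun_eq_iff)
    ultimately show "summable (\<lambda>i. norm (g i - 1))" by simp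
  qed
  have limP: "(\<lambda>N. \<Prod>i\<le>N. g i) \<longlonglongrightarrow> prodinf g" by (rule convergent_prod_LIMSEQ[OF conv])
  have sumff: "summable (\<lambda>k. (-q) ^ k * PP q 1 k)"
    by (rule ff_summable) (use assms in auto)
  have limS: "SS \<longlonglongrightarrow> uu q 0"
  proof -
    have "SS \<longlonglongrightarrow> (\<Sum>k. (-q) ^ k * PP q 1 k)" unfolding SS_def by (rule summable_LIMSEQ[OF sumff])
    moreover have "(\<Sum>k. (-q) ^ k * PP q 1 k) = uu q 0" by (simp add: uu_def ff_def)
    ultimately show ?thesis by simp
  qed
  have limS2: "(\<lambda>N. SS (N + 2)) \<longlonglongrightarrow> uu q 0"
    using limS by (rule LIMSEQ_ignore_initial_segment)
  have limV: "(\<lambda>N. BB (N + 2)) \<longlonglongrightarrow> 0"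
    using VV_lim[OF assms] unfolding BB_def by (rule LIMSEQ_ignore_initial_segment)
  define L where "L = - q * prodinf g + (- q * (uu q 0 - 1)) / (1 + q)"
  have eq: "(\<Sum>n<N + 2. f n) = - q * (\<Prod>i\<le>N. g i) + (- q * (SS (N + 2) - 1)) / (1 + q) - BB (N + 2)" for N
  proof -
    have "(\<Sum>n<N + 2. f n) = (\<Sum>S\<in>WW (N + 2). sg S * q ^ \<Sum>S)" unfolding f_def by (rule partial_eq)
    also have "\<dots> = (\<Sum>S\<in>Pow {1..N+2} - {{}}. sg S * q ^ \<Sum>S) - BB (N + 2)"
      unfolding BB_def T_split by simp
    also have "(\<Sum>S\<in>Pow {1..N+2} - {{}}. sg S * q ^ \<Sum>S)
        = - q * (\<Prod>j\<in>{2..N+2}. 1 - q ^ j) + (\<Sum>S\<in>Pow {2..N+2} - {{}}. (-1) ^ Max S * q ^ \<Sum>S)"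
      by (rule T_dec) simp
    also have "(\<Prod>j\<in>{2..N+2}. 1 - q ^ j) = (\<Prod>i\<le>N. g i)"
    proof -
      have h: "{2..N+2} = {0+2..N+2}" by simp
      have "(\<Prod>j\<in>{2..N+2}. 1 - q ^ j) = (\<Prod>i\<in>{0..N}. 1 - q ^ (i + 2))"
        unfolding h by (rule prod.shift_bounds_cl_nat_ivl)
      then show ?thesis unfolding g_def atLeast0AtMost .
    qed
    also have "(\<Sum>S\<in>Pow {2..N+2} - {{}}. (-1) ^ Max S * q ^ \<Sum>S) = (- q * (SS (N + 2) - 1)) / (1 + q)"
    proof -
      have "(1 + q) * (\<Sum>S\<in>Pow {2..N+2} - {{}}. (-1) ^ Max S * q ^ \<Sum>S) = - q * (SS (N + 2) - 1)"
        unfolding C_part SS_def by (rule C_eq) simp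
      then show ?thesis using q1 by (simp add: field_simps)
    qed
    finally show ?thesis .
  qed
  have "(\<lambda>N. - q * (\<Prod>i\<le>N. g i) + (- q * (SS (N + 2) - 1)) / (1 + q) - BB (N + 2))
      \<longlonglongrightarrow> - q * prodinf g + (- q * (uu q 0 - 1)) / (1 + q) - 0"
    by (intro tendsto_intros limP limS2 limV q1)
  then have "(\<lambda>N. \<Sum>n<N + 2. f n) \<longlonglongrightarrow> L" unfolding eq L_def by simp
  then have "(\<lambda>N. \<Sum>n<N. f n) \<longlonglongrightarrow> L" by (rule LIMSEQ_offset)
  then have "f sums L" unfolding sums_def .
  then have lhs: "suminf f = L" by (rule sums_unique[symmetric])
  have rs: "(\<Sum>n. q ^ (Suc n * (3 * Suc n + 1) div 2) * (1 - q ^ (2 * Suc n + 1))) = q - q * uu q 0"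
    by (rule sums_unique[OF target_sums[OF assms], symmetric])
  show ?thesis
    unfolding f_def[symmetric] g_def[symmetric] lhs rs L_def using q1
    by (simp add: field_simps)
qed

end
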